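(* Let $\sigma:\mathbb{Z}^2\times\mathbb{Z}^2\to U(1)$ be $\sigma((n,m),(n',m'))=\exp(-2\pi i(\xi_1 nm'+\xi_2 mn'))$ with $\xi_2=\theta/2=-\xi_1$. Then the map $\tilde\sigma:(\mathbb{Z}^2\rtimes_{\varphi_\epsilon}\mathbb{Z})\times(\mathbb{Z}^2\rtimes_{\varphi_\epsilon}\mathbb{Z})\to U(1)$, $$\tilde\sigma((n,m,k),(n',m',k')) := \sigma\big((n,m),(n',m')\varphi_\epsilon^k\big),$$ is a multiplier on the group $\mathbb{Z}^2\rtimes_{\varphi_\epsilon}\mathbb{Z}$.
   Context: Let $\mathbb{K}$ be a real quadratic field, $\theta\in\mathbb{K}\setminus\mathbb{Q}$ (regarded as a real number via a fixed real embedding), and let $\epsilon$ be a totally positive unit of $\mathbb{K}$ with $\epsilon(\mathbb{Z}+\mathbb{Z}\theta)=\mathbb{Z}+\mathbb{Z}\theta$. Write $\epsilon=a+b\theta$ and $\epsilon\theta=c+d\theta$ with $a,b,c,d\in\mathbb{Z}$ and set $\varphi_\epsilon=\begin{pmatrix}a&b\\c&d\end{pmatrix}$, which lies in $\mathrm{SL}_2(\mathbb{Z})$. The group $\mathbb{Z}^2\rtimes_{\varphi_\epsilon}\mathbb{Z}$ consists of triples $(n,m,k)$, with elements of $\mathbb{Z}^2$ written as row vectors, and product $((n,m),k)\cdot((n',m'),k')=((n,m)+(n',m')\varphi_\epsilon^k,\,k+k')$. A multiplier on a discrete group $\Gamma$ is a map $\sigma:\Gamma\times\Gamma\to U(1)$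 satisfying $\sigma(\gamma_1,\gamma_2)\sigma(\gamma_1\gamma_2,\gamma_3)=\sigma(\gamma_1,\gamma_2\gamma_3)\sigma(\gamma_2,\gamma_3)$ and $\sigma(\gamma,1)=\sigma(1,\gamma)=1$. *)

theory Defs
  imports "HOL-Analysis.Analysis" "HOL-Computational_Algebra.Polynomial"
begin

definition quad_irrational :: "real \<Rightarrow> bool" where
  "quad_irrational \<theta> \<longleftrightarrow> \<theta> \<notin> \<rat> \<and> (\<exists>p\<in>\<rat>. \<exists>q\<in>\<rat>. \<theta>^2 = p * \<theta> + q)"

definition qfield :: "real \<Rightarrow> real set" where
  "qfield \<theta> = {r + s * \<theta> | r s. r \<in> \<rat> \<and> s \<in> \<rat>}"

text \<open>Coefficients (p,q) with theta^2 = p theta + q; p is the trace of theta.\<close>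
definition quad_min :: "real \<Rightarrow> real \<times> real" where
  "quad_min \<theta> = (SOME (p, q). p \<in> \<rat> \<and> q \<in> \<rat> \<and> \<theta>^2 = p * \<theta> + q)"

definition qcoords :: "real \<Rightarrow> real \<Rightarrow> real \<times> real" where
  "qcoords \<theta> x = (THE (r, s). r \<in> \<rat> \<and> s \<in> \<rat> \<and> x = r + s * \<theta>)"

definition qconj :: "real \<Rightarrow> real \<Rightarrow> real" where
  "qconj \<theta> x = (case qcoords \<theta> x of (r, s) \<Rightarrow> r + s * (fst (quad_min \<theta>) - \<theta>))"

definition totally_positive_unit :: "real \<Rightarrow> real \<Rightarrow> bool" where
  "totally_positive_unit \<theta> \<epsilon> \<longleftrightarrow>
     \<epsilon> \<in> qfield \<theta> \<and> algebraic_int \<epsilon> \<and> algebraic_int (1 / \<epsilon>) \<and>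
     \<epsilon> > 0 \<and> qconj \<theta> \<epsilon> > 0"

definition zlattice :: "real \<Rightarrow> real set" where
  "zlattice \<theta> = {of_int n + of_int m * \<theta> | n m. True}"

type_synonym mat2 = "int \<times> int \<times> int \<times> int"  \<comment> \<open>(a,b,c,d) = [[a,b],[c,d]]\<close>

definition det2 :: "mat2 \<Rightarrow> int" where
  "det2 M = (case M of (a, b, c, d) \<Rightarrow> a * d - b * c)"

definition rmul :: "int \<times> int \<Rightarrow> mat2 \<Rightarrow> int \<times> int" where
  "rmul v M = (case v of (n, m) \<Rightarrow> case M of (a, b, c, d) \<Rightarrow> (n * a + m * c, n * b + m * d))"

definition sl2_inv :: "mat2 \<Rightarrow> mat2" where
  "sl2_inv M = (case M of (a, b, c, d) \<Rightarrow> (d, -b, -c, a))"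

text \<open>v * M^k for integer k (for det M = 1).\<close>
definition rmul_pow :: "int \<times> int \<Rightarrow> mat2 \<Rightarrow> int \<Rightarrow> int \<times> int" where
  "rmul_pow v M k = (if 0 \<le> k then ((\<lambda>w. rmul w M) ^^ nat k) v
                    else ((\<lambda>w. rmul w (sl2_inv M)) ^^ nat (- k)) v)"

definition sd_mult :: "mat2 \<Rightarrow> (int \<times> int) \<times> int \<Rightarrow> (int \<times> int) \<times> int \<Rightarrow> (int \<times> int) \<times> int" where
  "sd_mult M x y = (case x of (v, k) \<Rightarrow> case y of (v', k') \<Rightarrow> (v + rmul_pow v' M k, k + k'))"

definition sd_one :: "(int \<times> int) \<times> int" where
  "sd_one = ((0, 0), 0)"

definition multiplier :: "('g \<Rightarrow> 'g \<Rightarrow> 'g) \<Rightarrow> 'g \<Rightarrow> ('g \<Rightarrow> 'g \<Rightarrow> complex) \<Rightarrow> bool" where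
  "multiplier mul e s \<longleftrightarrow>
     (\<forall>x y. norm (s x y) = 1) \<and>
     (\<forall>x y z. s x y * s (mul x y) z = s x (mul y z) * s y z) \<and>
     (\<forall>x. s x e = 1 \<and> s e x = 1)"

definition sigma2 :: "real \<Rightarrow> real \<Rightarrow> int \<times> int \<Rightarrow> int \<times> int \<Rightarrow> complex" where
  "sigma2 \<xi>1 \<xi>2 v w = (case v of (n, m) \<Rightarrow> case w of (n', m') \<Rightarrow>
      exp (- 2 * of_real pi * \<i> * of_real (\<xi>1 * of_int (n * m') + \<xi>2 * of_int (m * n'))))"

definition sigma_tilde :: "real \<Rightarrow> real \<Rightarrow> mat2 \<Rightarrow> (int \<times> int) \<times> int \<Rightarrow> (int \<times> int) \<times> int \<Rightarrow> complex" where
  "sigma_tilde \<xi>1 \<xi>2 M x y = (case x of (v, k) \<Rightarrow> case y of (v', k') \<Rightarrow>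
      sigma2 \<xi>1 \<xi>2 v (rmul_pow v' M k))"

end

theory Submission
  imports Defs
begin

definition omega :: "int \<times> int \<Rightarrow> int \<times> int \<Rightarrow> int" where
  "omega v w = (case v of (n, m) \<Rightarrow> case w of (n', m') \<Rightarrow> m * n' - n * m')"

lemma omega_simp[simp]: "omega (n, m) (n', m') = m * n' - n * m'"
  by (simp add: omega_def)

lemma omega_add1: "omega (v + v') w = omega v w + omega v' w"
  by (cases v; cases v'; cases w) (simp add: algebra_simps)

lemma omega_add2: "omega v (w + w') = omega v w + omega v w'"
  by (cases v; cases w; cases w') (simp add: algebra_simps)

lemma omega_zero1[simp]: "omega 0 w = 0"
  by (cases w) (simp add: zero_prod_def)

lemma omega_zero2[simp]: "omega v 0 = 0"
  by (cases v) (simp add: zero_prod_def)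

lemma rmul_simp[simp]: "rmul (n, m) (a, b, c, d) = (n * a + m * c, n * b + m * d)"
  by (simp add: rmul_def)

lemma rmul_add: "rmul (v + w) M = rmul v M + rmul w M"
  by (cases v; cases w; cases M rule: prod_cases4) (simp add: algebra_simps)

lemma rmul_zero: "rmul 0 M = 0"
  by (cases M rule: prod_cases4) (simp add: zero_prod_def)

lemma rmul_inv1:
  assumes "a * d - b * c = 1"
  shows "rmul (rmul w (a, b, c, d)) (sl2_inv (a, b, c, d)) = w"
proof (cases w)
  case (Pair n m)
  have "(n * a + m * c) * d + (n * b + m * d) * - c = n * (a * d - b * c)"
    by (simp add: algebra_simps)
  moreover have "(n * a + m * c) * - b + (n * b + m * d) * a = m * (a * d - b * c)"
    by (simp add: algebra_simps)
  ultimately show ?thesis using Pair assms by (simp add: sl2_inv_def)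
qed

lemma rmul_inv2:
  assumes "a * d - b * c = 1"
  shows "rmul (rmul w (sl2_inv (a, b, c, d))) (a, b, c, d) = w"
proof (cases w)
  case (Pair n m)
  have "(n * d + m * - c) * a + (n * - b + m * a) * c = n * (a * d - b * c)"
    by (simp add: algebra_simps)
  moreover have "(n * d + m * - c) * b + (n * - b + m * a) * d = m * (a * d - b * c)"
    by (simp add: algebra_simps)
  ultimately show ?thesis using Pair assms by (simp add: sl2_inv_def)
qed

lemma omega_rmul:
  assumes "a * d - b * c = 1"
  shows "omega (rmul v (a, b, c, d)) (rmul w (a, b, c, d)) = omega v w"
proof (cases v; cases w)
  fix n m n' m'
  assume "v = (n, m)" "w = (n', m')"
  moreover have "(n * b + m * d) * (n' * a + m' * c) - (n * a + m * c) * (n' * b + m' * d)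
      = (m * n' - n * m') * (a * d - b * c)"
    by (simp add: algebra_simps)
  ultimately show ?thesis using assms by simp
qed

lemma omega_rmul_inv:
  assumes "a * d - b * c = 1"
  shows "omega (rmul v (sl2_inv (a, b, c, d))) (rmul w (sl2_inv (a, b, c, d))) = omega v w"
  using omega_rmul[where a=d and b="-b" and c="-c" and d=a and v=v and w=w] assms
  by (simp add: sl2_inv_def algebra_simps)

lemma rmul_pow_lin:
  "rmul_pow (v + w) M k = rmul_pow v M k + rmul_pow w M k"
proof -
  have A: "(f ^^ n) (v + w) = (f ^^ n) v + (f ^^ n) w"
    if "\<And>x y. f (x + y) = f x + f y" for f :: "int \<times> int \<Rightarrow> int \<times> int" and n v w
    by (induction n) (simp_all add: that)
  show ?thesis unfolding rmul_pow_def
    by (simp add: A rmul_add)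
qed

lemma rmul_pow_zero: "rmul_pow 0 M k = 0"
proof -
  have A: "(f ^^ n) 0 = 0" if "f 0 = 0" for f :: "int \<times> int \<Rightarrow> int \<times> int" and n
    by (induction n) (simp_all add: that)
  show ?thesis unfolding rmul_pow_def by (simp add: A rmul_zero)
qed

lemma rmul_pow_0[simp]: "rmul_pow v M 0 = v"
  by (simp add: rmul_pow_def)

lemma rmul_pow_succ:
  assumes "a * d - b * c = 1"
  shows "rmul_pow v (a, b, c, d) (k + 1) = rmul (rmul_pow v (a, b, c, d) k) (a, b, c, d)"
proof (cases "0 \<le> k")
  case True
  then have "nat (k + 1) = Suc (nat k)" by simp
  then show ?thesis using True by (simp add: rmul_pow_def)
next
  case False
  show ?thesis
  proof (cases "k = -1")
    case True
    then show ?thesis using rmul_inv2[OF assms] by (simp add: rmul_pow_def)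
  next
    case False2: False
    then have "nat (- k) = Suc (nat (- (k + 1)))" using False by simp
    then show ?thesis using False False2 rmul_inv2[OF assms] by (simp add: rmul_pow_def)
  qed
qed

lemma rmul_pow_pred:
  assumes "a * d - b * c = 1"
  shows "rmul_pow v (a, b, c, d) (k - 1) = rmul (rmul_pow v (a, b, c, d) k) (sl2_inv (a, b, c, d))"
proof (cases "0 < k")
  case True
  then have "nat k = Suc (nat (k - 1))" by simp
  then show ?thesis using True rmul_inv1[OF assms] by (simp add: rmul_pow_def)
next
  case False
  then have "nat (- (k - 1)) = Suc (nat (- k))" by simp
  moreover have "rmul_pow v (a, b, c, d) k = ((\<lambda>w. rmul w (sl2_inv (a, b, c, d))) ^^ nat (- k)) v"
    using False by (cases "k = 0") (simp_all add: rmul_pow_def)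
  ultimately show ?thesis using False by (simp add: rmul_pow_def)
qed

lemma rmul_pow_comp:
  assumes "a * d - b * c = 1"
  shows "rmul_pow (rmul_pow v (a, b, c, d) k') (a, b, c, d) k = rmul_pow v (a, b, c, d) (k + k')"
proof (induction k rule: int_induct[where k = 0])
  case base
  then show ?case by simp
next
  case (step1 i)
  have e: "i + 1 + k' = (i + k') + 1" by simp
  show ?case by (simp only: e rmul_pow_succ[OF assms] step1(2))
next
  case (step2 i)
  have e: "i - 1 + k' = (i + k') - 1" by simp
  show ?case by (simp only: e rmul_pow_pred[OF assms] step2(2))
qed

lemma omega_pow:
  assumes "a * d - b * c = 1"
  shows "omega (rmul_pow v (a, b, c, d) k) (rmul_pow w (a, b, c, d) k) = omega v w"
proof (induction k rule: int_induct[where k = 0])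
  case base
  then show ?case by simp
next
  case (step1 i)
  then show ?case using rmul_pow_succ[OF assms] omega_rmul[OF assms] by simp
next
  case (step2 i)
  then show ?case using rmul_pow_pred[OF assms] omega_rmul_inv[OF assms] by simp
qed

definition CC :: "real \<Rightarrow> complex" where
  "CC t = - 2 * of_real pi * \<i> * of_real t"

lemma sigma2_eq: "sigma2 (- t) t v w = exp (of_int (omega v w) * CC t)"
proof (cases v; cases w)
  fix n m n' m'
  assume "v = (n, m)" "w = (n', m')"
  moreover have "(- t * of_int (n * m') + t * of_int (m * n')) = t * of_int (m * n' - n * m')"
    by (simp add: algebra_simps)
  ultimately show ?thesis
    by (simp add: sigma2_def CC_def algebra_simps)
qed

lemma cocycle_main:
  assumes det: "a * d - b * c = 1"
  shows "multiplier (sd_mult (a, b, c, d)) sd_one (sigma_tilde (- t) t (a, b, c, d))"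
proof -
  let ?M = "(a, b, c, d)"
  let ?P = "\<lambda>v k. rmul_pow v ?M k"
  have st: "sigma_tilde (- t) t ?M (v, k) (v', k') = exp (of_int (omega v (?P v' k)) * CC t)"
    for v k v' k' by (simp add: sigma_tilde_def sigma2_eq)
  have sm: "sd_mult ?M (v, k) (v', k') = (v + ?P v' k, k + k')" for v k v' k'
    by (simp add: sd_mult_def)
  have n1: "norm (sigma_tilde (- t) t ?M x y) = 1" for x y
  proof -
    obtain v k where x: "x = (v, k)" by (cases x)
    obtain v' k' where y: "y = (v', k')" by (cases y)
    have e: "of_int (omega v (?P v' k)) * CC t = \<i> * of_real (- 2 * pi * t * of_int (omega v (?P v' k)))"
      by (simp add: CC_def algebra_simps)
    show ?thesis unfolding x y st e by (rule norm_exp_i_times)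
  qed
  have coc: "sigma_tilde (- t) t ?M x y * sigma_tilde (- t) t ?M (sd_mult ?M x y) z =
      sigma_tilde (- t) t ?M x (sd_mult ?M y z) * sigma_tilde (- t) t ?M y z" for x y z
  proof -
    obtain v k where x: "x = (v, k)" by (cases x)
    obtain v' k' where y: "y = (v', k')" by (cases y)
    obtain v'' k'' where z: "z = (v'', k'')" by (cases z)
    have ie: "omega v (?P v' k) + omega (v + ?P v' k) (?P v'' (k + k'))
        = omega v (?P (v' + ?P v'' k') k) + omega v' (?P v'' k')"
    proof -
      have h1: "?P (v' + ?P v'' k') k = ?P v' k + ?P v'' (k + k')"
        by (simp only: rmul_pow_lin rmul_pow_comp[OF det])
      have h2: "omega (?P v' k) (?P v'' (k + k')) = omega v' (?P v'' k')"
        using omega_pow[OF det, of v' k "?P v'' k'"] rmul_pow_comp[OF det, of v'' k' k] by simp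
      show ?thesis unfolding h1 omega_add1 omega_add2 h2 by simp
    qed
    have eq: "of_int (omega v (?P v' k)) * CC t + of_int (omega (v + ?P v' k) (?P v'' (k + k'))) * CC t
        = of_int (omega v (?P (v' + ?P v'' k') k)) * CC t + of_int (omega v' (?P v'' k')) * CC t"
      by (simp only: distrib_right[symmetric] of_int_add[symmetric] ie)
    show ?thesis unfolding x y z sm st exp_add[symmetric] eq by (rule refl)
  qed
  have id: "sigma_tilde (- t) t ?M x sd_one = 1 \<and> sigma_tilde (- t) t ?M sd_one x = 1" for x
  proof -
    obtain v k where x: "x = (v, k)" by (cases x)
    have z: "sd_one = (0, 0)" by (simp add: sd_one_def zero_prod_def)
    show ?thesis unfolding x z st by (simp add: rmul_pow_zero)
  qed
  show ?thesis unfolding multiplier_def using n1 coc id by blast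
qed

lemma irr_eq:
  assumes "\<theta> \<notin> \<rat>" "(x::real) \<in> \<rat>" "y \<in> \<rat>" "x' \<in> \<rat>" "y' \<in> \<rat>"
    and "x + y * \<theta> = x' + y' * \<theta>"
  shows "x = x' \<and> y = y'"
proof (cases "y = y'")
  case True
  then show ?thesis using assms by simp
next
  case False
  then have "\<theta> = (x - x') / (y' - y)" using assms(6)
    by (simp add: field_simps)
  moreover have "(x - x') / (y' - y) \<in> \<rat>" using assms by simp
  ultimately show ?thesis using assms(1) by simp
qed

lemma irr_eq_int:
  fixes \<theta> :: real
  assumes "\<theta> \<notin> \<rat>" "of_int x + of_int y * \<theta> = of_int x' + of_int y' * \<theta>"
  shows "x = x' \<and> y = y'"
proof -
  have "real_of_int x = of_int x' \<and> real_of_int y = of_int y'"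
    by (rule irr_eq[OF assms(1)]) (use assms(2) in auto)
  then show ?thesis by simp
qed

theorem lemma4p3:
  fixes \<theta> \<epsilon> :: real and a b c d :: int
  assumes "quad_irrational \<theta>"
    and "totally_positive_unit \<theta> \<epsilon>"
    and "(\<lambda>x. \<epsilon> * x) ` zlattice \<theta> = zlattice \<theta>"
    and "\<epsilon> = of_int a + of_int b * \<theta>"
    and "\<epsilon> * \<theta> = of_int c + of_int d * \<theta>"
  shows "multiplier (sd_mult (a, b, c, d)) sd_one
           (sigma_tilde (- \<theta> / 2) (\<theta> / 2) (a, b, c, d))"
proof -
  have irr: "\<theta> \<notin> \<rat>" using assms(1) by (simp add: quad_irrational_def)
  have lat: "of_int x + of_int y * \<theta> \<in> zlattice \<theta>" for x y
    unfolding zlattice_def by blast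
  have "1 \<in> (\<lambda>x. \<epsilon> * x) ` zlattice \<theta>"
    using lat[of 1 0] assms(3) by simp
  then obtain x1 where x1: "x1 \<in> zlattice \<theta>" "1 = \<epsilon> * x1" by blast
  then obtain p q :: int where "x1 = of_int p + of_int q * \<theta>"
    unfolding zlattice_def by blast
  then have pq: "\<epsilon> * (of_int p + of_int q * \<theta>) = 1" using x1 by simp
  have "\<theta> \<in> (\<lambda>x. \<epsilon> * x) ` zlattice \<theta>"
    using lat[of 0 1] assms(3) by simp
  then obtain x2 where x2: "x2 \<in> zlattice \<theta>" "\<theta> = \<epsilon> * x2" by blast
  then obtain r s :: int where "x2 = of_int r + of_int s * \<theta>"
    unfolding zlattice_def by blast
  then have rs: "\<epsilon> * (of_int r + of_int s * \<theta>) = \<theta>" using x2 by simp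
  have expand: "\<epsilon> * (of_int x + of_int y * \<theta>)
      = of_int (x * a + y * c) + of_int (x * b + y * d) * \<theta>" for x y
  proof -
    have "\<epsilon> * (of_int x + of_int y * \<theta>) = of_int x * \<epsilon> + of_int y * (\<epsilon> * \<theta>)"
      by (simp add: algebra_simps)
    also have "\<dots> = of_int (x * a + y * c) + of_int (x * b + y * d) * \<theta>"
      using assms(4,5) by (simp add: algebra_simps)
    finally show ?thesis .
  qed
  have "p * a + q * c = 1 \<and> p * b + q * d = 0"
    using irr_eq_int[OF irr, of "p * a + q * c" "p * b + q * d" 1 0] pq expand[of p q] by simp
  moreover have "r * a + s * c = 0 \<and> r * b + s * d = 1"
    using irr_eq_int[OF irr, of "r * a + s * c" "r * b + s * d" 0 1] rs expand[of r s] by simp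
  moreover have "(p * s - q * r) * (a * d - b * c)
      = (p * a + q * c) * (r * b + s * d) - (p * b + q * d) * (r * a + s * c)"
    by (simp add: algebra_simps)
  ultimately have "(p * s - q * r) * (a * d - b * c) = 1"
    by simp
  then have pm: "a * d - b * c = 1 \<or> a * d - b * c = -1"
    using zmult_eq_1_iff by blast
  have rel: "of_int b * \<theta>^2 = of_int (d - a) * \<theta> + of_int c"
    using assms(4,5) by (simp add: power2_eq_square algebra_simps)
  have pos: "a * d - b * c > 0"
  proof (cases "b = 0")
    case True
    then have "of_int c + of_int d * \<theta> = of_int 0 + of_int a * \<theta>"
      using assms(4,5) by (simp add: algebra_simps)
    from irr_eq_int[OF irr this] have "c = 0" "d = a" by auto
    then have "a * d - b * c = a * a" using True by simp
    moreover have "a * a \<noteq> 0" using pm \<open>a * d - b * c = a * a\<close> by auto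
    ultimately show ?thesis by (auto simp: zero_less_mult_iff linorder_neq_iff)
  next
    case False
    obtain P0 Q0 where PQ: "P0 \<in> \<rat>" "Q0 \<in> \<rat>" "\<theta>^2 = P0 * \<theta> + Q0"
      using assms(1) unfolding quad_irrational_def by blast
    have "\<exists>z. (\<lambda>(p, q). p \<in> \<rat> \<and> q \<in> \<rat> \<and> \<theta>^2 = p * \<theta> + q) z"
      using PQ by auto
    from someI_ex[OF this] obtain P Q where PQ': "quad_min \<theta> = (P, Q)"
      "P \<in> \<rat>" "Q \<in> \<rat>" "\<theta>^2 = P * \<theta> + Q"
      unfolding quad_min_def by (auto split: prod.splits)
    have "(of_int b * Q - of_int c) + (of_int b * P) * \<theta> = 0 + of_int (d - a) * \<theta>"
      using rel PQ'(4) by (simp add: algebra_simps)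
    from irr_eq[OF irr _ _ _ _ this] PQ'(2,3) have bP: "of_int b * P = of_int (d - a)"
      by simp
    have qc: "qcoords \<theta> \<epsilon> = (of_int a, of_int b)"
      unfolding qcoords_def
    proof (rule the_equality)
      show "case (real_of_int a, real_of_int b) of (r, s) \<Rightarrow> r \<in> \<rat> \<and> s \<in> \<rat> \<and> \<epsilon> = r + s * \<theta>"
        using assms(4) by simp
    next
      fix z assume "case z of (r, s) \<Rightarrow> r \<in> \<rat> \<and> s \<in> \<rat> \<and> \<epsilon> = r + s * \<theta>"
      then obtain r s where z: "z = (r, s)" "r \<in> \<rat>" "s \<in> \<rat>" "\<epsilon> = r + s * \<theta>"
        by (cases z) auto
      then have "r + s * \<theta> = of_int a + of_int b * \<theta>" using assms(4) by simp
      from irr_eq[OF irr _ _ _ _ this] z show "z = (real_of_int a, real_of_int b)" by simp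
    qed
    have "qconj \<theta> \<epsilon> = of_int a + of_int b * (P - \<theta>)"
      unfolding qconj_def using qc PQ'(1) by simp
    also have "\<dots> = of_int d - of_int b * \<theta>"
      using bP by (simp add: algebra_simps)
    finally have qe: "qconj \<theta> \<epsilon> = of_int d - of_int b * \<theta>" .
    have "\<epsilon> * qconj \<theta> \<epsilon> = \<epsilon> * (of_int d - of_int b * \<theta>)"
      by (simp only: qe)
    also have "\<dots> = of_int a * of_int d - of_int a * of_int b * \<theta>
        + of_int b * of_int d * \<theta> - of_int b * (of_int b * \<theta>^2)"
      unfolding assms(4) by (simp add: algebra_simps power2_eq_square)
    also have "\<dots> = of_int (a * d - b * c)"
      unfolding rel by (simp add: algebra_simps)
    finally have "of_int (a * d - b * c) = \<epsilon> * qconj \<theta> \<epsilon>" by simp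
    moreover have "\<epsilon> * qconj \<theta> \<epsilon> > 0"
      using assms(2) unfolding totally_positive_unit_def by simp
    ultimately have "(0::real) < of_int (a * d - b * c)" by simp
    then show ?thesis by (simp only: of_int_0_less_iff)
  qed
  then have det: "a * d - b * c = 1" using pm by linarith
  show ?thesis using cocycle_main[OF det, of "\<theta> / 2"] by simp
qed

end
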